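(* For all types $\tau_1,\tau_2,\tau_p$ with $\tau_p=\tau_1+\tau_2$, every heap $H$, register file $R$ and value $v$: $\mathrm{SATv}(H,R,v,\tau_p)$ holds if and only if both $\mathrm{SATv}(H,R,v,\tau_1)$ and $\mathrm{SATv}(H,R,v,\tau_2)$ hold.
   Context: Refinement formulas are first-order formulas over integer program variables, integer literals, a value variable $\nu$, atomic predicates of a fixed theory and context-prefix predicates; $\models\psi$ means $\psi$ is valid. Types $\tau ::= \{\nu:\mathtt{int}\mid\varphi\}\mid\tau\ \mathtt{ref}^r$, $r\in[0,1]$ rational. Type addition is the least commutative partial operation with $\{\nu:\mathtt{int}\mid\varphi_1\}+\{\nu:\mathtt{int}\mid\varphi_2\}=\{\nu:\mathtt{int}\mid\varphi_1\wedge\varphi_2\}$ and $\tau_1\ \mathtt{ref}^{r_1}+\tau_2\ \mathtt{ref}^{r_2}=(\tau_1+\tau_2)\ \mathtt{ref}^{r_1+r_2}$. Values: integers or addresses; heap $H$: finite partial map addresses $\to$ values; register file $R$: finite partial map variables $\to$ values. $[R]\varphi$: $[\emptyset]\varphi=\varphi$, $[R\{x\mapsto n\}]\varphi=[R][n/x]\varphi$ ($n$ integer), $[R\{x\mapsto a\}]\varphi=[R]\varphi$ ($a$ address). $\mathrm{SATv}(H,R,v,\tau)$: for $\tau=\{\nu:\mathtt{int}\mid\varphi\}$, $v\in\mathbb Z$ and $\models[R][v/\nu]\varphi$; for $\tau=\tau'\ \mathtt{ref}^r$, $v$ is an address $a\in dom(H)$ and $\mathrm{SATv}(H,R,H(a),\tau')$.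 *)

theory Defs
  imports Complex_Main
begin

datatype 'v trm = TVar 'v | TNu | TLit int

datatype ('v,'p,'c) fml =
    FTrue | FFalse
  | Atom 'p "'v trm list"
  | CtxPre 'c
  | Neg "('v,'p,'c) fml"
  | Conj "('v,'p,'c) fml" "('v,'p,'c) fml"
  | Disj "('v,'p,'c) fml" "('v,'p,'c) fml"
  | Impl "('v,'p,'c) fml" "('v,'p,'c) fml"
  | Forall 'v "('v,'p,'c) fml"
  | Exists 'v "('v,'p,'c) fml"

fun trm_val :: "('v \<Rightarrow> int) \<Rightarrow> int \<Rightarrow> 'v trm \<Rightarrow> int" where
  "trm_val \<sigma> n (TVar x) = \<sigma> x"
| "trm_val \<sigma> n TNu = n"
| "trm_val \<sigma> n (TLit i) = i"

fun holds :: "('p \<Rightarrow> int list \<Rightarrow> bool) \<Rightarrow> ('c \<Rightarrow> 'k \<Rightarrow> bool) \<Rightarrow> 'k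
              \<Rightarrow> ('v \<Rightarrow> int) \<Rightarrow> int \<Rightarrow> ('v,'p,'c) fml \<Rightarrow> bool" where
  "holds IP IC k \<sigma> n FTrue = True"
| "holds IP IC k \<sigma> n FFalse = False"
| "holds IP IC k \<sigma> n (Atom p ts) = IP p (map (trm_val \<sigma> n) ts)"
| "holds IP IC k \<sigma> n (CtxPre c) = IC c k"
| "holds IP IC k \<sigma> n (Neg f) = (\<not> holds IP IC k \<sigma> n f)"
| "holds IP IC k \<sigma> n (Conj f g) = (holds IP IC k \<sigma> n f \<and> holds IP IC k \<sigma> n g)"
| "holds IP IC k \<sigma> n (Disj f g) = (holds IP IC k \<sigma> n f \<or> holds IP IC k \<sigma> n g)"
| "holds IP IC k \<sigma> n (Impl f g) = (holds IP IC k \<sigma> n f \<longrightarrow> holds IP IC k \<sigma> n g)"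
| "holds IP IC k \<sigma> n (Forall x f) = (\<forall>i. holds IP IC k (\<sigma>(x := i)) n f)"
| "holds IP IC k \<sigma> n (Exists x f) = (\<exists>i. holds IP IC k (\<sigma>(x := i)) n f)"

definition valid :: "('p \<Rightarrow> int list \<Rightarrow> bool) \<Rightarrow> ('c \<Rightarrow> 'k \<Rightarrow> bool) \<Rightarrow> ('v,'p,'c) fml \<Rightarrow> bool" where
  "valid IP IC f \<longleftrightarrow> (\<forall>k \<sigma> n. holds IP IC k \<sigma> n f)"

text \<open>Substitution of integers for variables / for nu (no capture possible: literals).
 subst_vars s f replaces every free occurrence of x by the literal i whenever s x = Some i.\<close>
fun trm_subst_vars :: "('v \<Rightarrow> int option) \<Rightarrow> 'v trm \<Rightarrow> 'v trm" where
  "trm_subst_vars s (TVar x) = (case s x of Some i \<Rightarrow> TLit i | None \<Rightarrow> TVar x)"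
| "trm_subst_vars s t = t"

fun subst_vars :: "('v \<Rightarrow> int option) \<Rightarrow> ('v,'p,'c) fml \<Rightarrow> ('v,'p,'c) fml" where
  "subst_vars s FTrue = FTrue"
| "subst_vars s FFalse = FFalse"
| "subst_vars s (Atom p ts) = Atom p (map (trm_subst_vars s) ts)"
| "subst_vars s (CtxPre c) = CtxPre c"
| "subst_vars s (Neg f) = Neg (subst_vars s f)"
| "subst_vars s (Conj f g) = Conj (subst_vars s f) (subst_vars s g)"
| "subst_vars s (Disj f g) = Disj (subst_vars s f) (subst_vars s g)"
| "subst_vars s (Impl f g) = Impl (subst_vars s f) (subst_vars s g)"
| "subst_vars s (Forall x f) = Forall x (subst_vars (s(x := None)) f)"
| "subst_vars s (Exists x f) = Exists x (subst_vars (s(x := None)) f)"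

fun trm_subst_nu :: "int \<Rightarrow> 'v trm \<Rightarrow> 'v trm" where
  "trm_subst_nu n TNu = TLit n"
| "trm_subst_nu n t = t"

fun subst_nu :: "int \<Rightarrow> ('v,'p,'c) fml \<Rightarrow> ('v,'p,'c) fml" where
  "subst_nu n FTrue = FTrue"
| "subst_nu n FFalse = FFalse"
| "subst_nu n (Atom p ts) = Atom p (map (trm_subst_nu n) ts)"
| "subst_nu n (CtxPre c) = CtxPre c"
| "subst_nu n (Neg f) = Neg (subst_nu n f)"
| "subst_nu n (Conj f g) = Conj (subst_nu n f) (subst_nu n g)"
| "subst_nu n (Disj f g) = Disj (subst_nu n f) (subst_nu n g)"
| "subst_nu n (Impl f g) = Impl (subst_nu n f) (subst_nu n g)"
| "subst_nu n (Forall x f) = Forall x (subst_nu n f)"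
| "subst_nu n (Exists x f) = Exists x (subst_nu n f)"

datatype 'a val = VInt int | VAddr 'a

type_synonym 'a heap = "'a \<rightharpoonup> 'a val"
type_synonym ('v,'a) regs = "'v \<rightharpoonup> 'a val"

text \<open>[R]phi: every register holding an integer n substitutes n for its variable;
 registers holding addresses are ignored. (Simultaneous form of the iterated definition;
 the substitutions are of literals for distinct variables, so order is irrelevant.)\<close>
definition int_part :: "('v,'a) regs \<Rightarrow> 'v \<Rightarrow> int option" where
  "int_part R x = (case R x of Some (VInt n) \<Rightarrow> Some n | _ \<Rightarrow> None)"

definition apply_regs :: "('v,'a) regs \<Rightarrow> ('v,'p,'c) fml \<Rightarrow> ('v,'p,'c) fml" where
  "apply_regs R f = subst_vars (int_part R) f"

datatype ('v,'p,'c) ty = TInt "('v,'p,'c) fml" | TRef "('v,'p,'c) ty" rat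

fun wf_ty :: "('v,'p,'c) ty \<Rightarrow> bool" where
  "wf_ty (TInt \<phi>) = True"
| "wf_ty (TRef t r) = (0 \<le> r \<and> r \<le> 1 \<and> wf_ty t)"

fun ty_add :: "('v,'p,'c) ty \<Rightarrow> ('v,'p,'c) ty \<Rightarrow> ('v,'p,'c) ty option" where
  "ty_add (TInt \<phi>1) (TInt \<phi>2) = Some (TInt (Conj \<phi>1 \<phi>2))"
| "ty_add (TRef t1 r1) (TRef t2 r2) =
     (case ty_add t1 t2 of Some t \<Rightarrow> Some (TRef t (r1 + r2)) | None \<Rightarrow> None)"
| "ty_add _ _ = None"

fun SATv :: "('p \<Rightarrow> int list \<Rightarrow> bool) \<Rightarrow> ('c \<Rightarrow> 'k \<Rightarrow> bool) \<Rightarrow>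
             'a heap \<Rightarrow> ('v,'a) regs \<Rightarrow> 'a val \<Rightarrow> ('v,'p,'c) ty \<Rightarrow> bool" where
  "SATv IP IC H R v (TInt \<phi>) =
     (case v of VInt n \<Rightarrow> valid IP IC (apply_regs R (subst_nu n \<phi>)) | VAddr _ \<Rightarrow> False)"
| "SATv IP IC H R v (TRef t r) =
     (case v of VAddr a \<Rightarrow> (case H a of Some w \<Rightarrow> SATv IP IC H R w t | None \<Rightarrow> False)
              | VInt _ \<Rightarrow> False)"

end

theory Submission
  imports Defs
begin

lemma valid_conj: "valid IP IC (Conj a b) \<longleftrightarrow> valid IP IC a \<and> valid IP IC b"
  unfolding valid_def by auto

lemma aux: "ty_add t1 t2 = Some tp \<Longrightarrow>
  SATv IP IC H R v tp \<longleftrightarrow> (SATv IP IC H R v t1 \<and> SATv IP IC H R v t2)"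
proof (induction t1 t2 arbitrary: tp v rule: ty_add.induct)
  case (1 \<phi>1 \<phi>2)
  then show ?case
    by (auto simp: apply_regs_def valid_conj split: val.splits)
next
  case (2 t1 r1 t2 r2)
  then show ?case
    by (auto split: option.splits val.splits)
qed auto

theorem lemma16:
  fixes IP :: "'p \<Rightarrow> int list \<Rightarrow> bool" and IC :: "'c \<Rightarrow> 'k \<Rightarrow> bool"
    and \<tau>1 \<tau>2 \<tau>p :: "('v,'p,'c) ty"
    and H :: "'a heap" and R :: "('v,'a) regs" and v :: "'a val"
  assumes "wf_ty \<tau>1" and "wf_ty \<tau>2" and "wf_ty \<tau>p"
    and "ty_add \<tau>1 \<tau>2 = Some \<tau>p"
    and "finite (dom H)" and "finite (dom R)"
  shows "SATv IP IC H R v \<tau>p \<longleftrightarrow> (SATv IP IC H R v \<tau>1 \<and> SATv IP IC H R v \<tau>2)"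
  using aux[OF assms(4)] .

end
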